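(* Let $X$ be a topological space with base point $x_0$ such that there exists a nonconstant (nontrivial) path in $X$ starting at $x_0$. Let $\Omega X=\{\alpha:[0,1]\to X \text{ continuous}:\alpha(0)=\alpha(1)=x_0\}$ with the compact-open topology, and $\Omega_{\mathrm{tf}}=\{\alpha\in\Omega X: \alpha(t)=\alpha(1-t)\ \text{for all } t\in[0,1]\}$. Then the inclusion $\Omega X\setminus\Omega_{\mathrm{tf}}\hookrightarrow\Omega X$ is a homotopy equivalence. *)

theory Defs
  imports "HOL-Analysis.Analysis" "HOL-Library.FuncSet"
begin

text \<open>Loops in X based at x0, as functions on [0,1] (extensional: undefined outside [0,1],
so that each loop is represented by exactly one HOL function).\<close>
definition loops :: "'a topology \<Rightarrow> 'a \<Rightarrow> (real \<Rightarrow> 'a) set" where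
  "loops X x0 = {\<alpha>. pathin X \<alpha> \<and> \<alpha> 0 = x0 \<and> \<alpha> 1 = x0 \<and> \<alpha> \<in> extensional {0..1}}"

definition compact_open_topology :: "'a topology \<Rightarrow> (real \<Rightarrow> 'a) topology" where
  "compact_open_topology X =
     topology_generated_by
       {{f. f ` K \<subseteq> U} | K U. compactin (top_of_set {0..1}) K \<and> openin X U}"

definition loop_space :: "'a topology \<Rightarrow> 'a \<Rightarrow> (real \<Rightarrow> 'a) topology" where
  "loop_space X x0 = subtopology (compact_open_topology X) (loops X x0)"

definition tf_loops :: "'a topology \<Rightarrow> 'a \<Rightarrow> (real \<Rightarrow> 'a) set" where
  "tf_loops X x0 = {\<alpha> \<in> loops X x0. \<forall>t\<in>{0..1}. \<alpha> t = \<alpha> (1 - t)}"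

definition homotopy_equivalence_map :: "'a topology \<Rightarrow> 'b topology \<Rightarrow> ('a \<Rightarrow> 'b) \<Rightarrow> bool" where
  "homotopy_equivalence_map X Y f \<longleftrightarrow>
     continuous_map X Y f \<and>
     (\<exists>g. continuous_map Y X g \<and>
          homotopic_with (\<lambda>h. True) X X (g \<circ> f) id \<and>
          homotopic_with (\<lambda>h. True) Y Y (f \<circ> g) id)"

end

theory Submission
  imports Defs
begin

lemma co_topspace: "topspace (compact_open_topology X) = UNIV"
proof -
  have "{f. f ` {} \<subseteq> {}} \<in> {{f. f ` K \<subseteq> U} | K U. compactin (top_of_set {0..1}) K \<and> openin X U}"
    by blast
  then show ?thesis unfolding compact_open_topology_def topology_generated_by_topspace by auto
qed

lemma co_cont:
  fixes F :: "'z \<Rightarrow> real \<Rightarrow> 'a" and X :: "'a topology"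
  assumes cont: "continuous_map (prod_topology Z (top_of_set {0..1})) X (\<lambda>(z,t). F z t)"
  shows "continuous_map Z (compact_open_topology X) F"
  unfolding compact_open_topology_def
proof (rule continuous_on_generated_topo)
  have "{f. f ` {} \<subseteq> {}} \<in> {{f. f ` K \<subseteq> U} | K U. compactin (top_of_set {0..1}) K \<and> openin X U}"
    by blast
  then show "F ` topspace Z \<subseteq> \<Union> {{f. f ` K \<subseteq> U} | K U. compactin (top_of_set {0..1}) K \<and> openin X U}"
    by auto
next
  fix W :: "(real \<Rightarrow> 'a) set" assume "W \<in> {{f. f ` K \<subseteq> U} | K U. compactin (top_of_set {0..1}) K \<and> openin X U}"
  then obtain K U where W: "W = {f. f ` K \<subseteq> U}" and K: "compactin (top_of_set {0..1}) K"
    and U: "openin X U" by blast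
  have KI: "K \<subseteq> {0..1}" using K compactin_subset_topspace by fastforce
  let ?P = "prod_topology Z (top_of_set {0..1})"
  have Wo: "openin ?P {x \<in> topspace ?P. (\<lambda>(z,t). F z t) x \<in> U}"
    using openin_continuous_map_preimage[OF cont U] .
  show "openin Z (F -` W \<inter> topspace Z)"
  proof (subst openin_subopen, intro ballI)
    fix z0 assume z0: "z0 \<in> F -` W \<inter> topspace Z"
    have "{z0} \<times> K \<subseteq> {x \<in> topspace ?P. (\<lambda>(z,t). F z t) x \<in> U}"
      using z0 KI W by auto
    from tube_lemma_right[OF Wo K _ this] z0
    obtain U' V' where "openin Z U'" "z0 \<in> U'" "K \<subseteq> V'"
      "U' \<times> V' \<subseteq> {x \<in> topspace ?P. (\<lambda>(z,t). F z t) x \<in> U}" by auto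
    then show "\<exists>T. openin Z T \<and> z0 \<in> T \<and> T \<subseteq> F -` W \<inter> topspace Z"
      using W openin_subset[of Z U'] by (intro exI[of _ U']) force
  qed
qed

lemma ev_cont:
  assumes S: "\<And>\<alpha>. \<alpha> \<in> S \<Longrightarrow> continuous_map (top_of_set {0..1}) X \<alpha>"
  shows "continuous_map (prod_topology (subtopology (compact_open_topology X) S) (top_of_set {0..1})) X (\<lambda>(\<alpha>,t). \<alpha> t)"
proof -
  let ?CS = "subtopology (compact_open_topology X) S"
  let ?P = "prod_topology ?CS (top_of_set {0..1})"
  have tsP: "topspace ?P = S \<times> {0..1}" by (simp add: co_topspace)
  show ?thesis unfolding continuous_map_def
  proof (intro conjI allI impI)
    show "(\<lambda>(\<alpha>,t). \<alpha> t) \<in> topspace ?P \<rightarrow> topspace X"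
      using S tsP continuous_map_image_subset_topspace by fastforce
  next
    fix U assume U: "openin X U"
    show "openin ?P {x \<in> topspace ?P. (\<lambda>(\<alpha>,t). \<alpha> t) x \<in> U}"
    proof (subst openin_subopen, intro ballI)
      fix x assume x: "x \<in> {x \<in> topspace ?P. (\<lambda>(\<alpha>,t). \<alpha> t) x \<in> U}"
      obtain \<alpha> t where xat: "x = (\<alpha>, t)" by fastforce
      have a: "\<alpha> \<in> S" and t: "t \<in> {0..1}" and atU: "\<alpha> t \<in> U" using x xat tsP by auto
      have "openin (top_of_set {0..1}) {u \<in> topspace (top_of_set {0..1}). \<alpha> u \<in> U}"
        using openin_continuous_map_preimage[OF S[OF a] U] .
      then have "openin (top_of_set {0..1}) {u \<in> {0..1}. \<alpha> u \<in> U}" by simp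
      then obtain e where e: "e > 0" "\<And>u. u \<in> {0..1} \<Longrightarrow> dist u t < e \<Longrightarrow> \<alpha> u \<in> U"
        using t atU unfolding openin_euclidean_subtopology_iff by blast
      define K where "K = {0..1} \<inter> {t - e/2 .. t + e/2}"
      define V where "V = {0..1} \<inter> ball t (e/2)"
      have Kc: "compactin (top_of_set {0..1}) K"
        unfolding K_def by (simp add: compactin_subtopology compact_Int)
      have Vo: "openin (top_of_set {0..1}) V" unfolding V_def by auto
      have aK: "\<alpha> ` K \<subseteq> U"
      proof
        fix y assume "y \<in> \<alpha> ` K"
        then obtain u where "u \<in> K" "y = \<alpha> u" by auto
        then show "y \<in> U" using e unfolding K_def by (auto simp: dist_real_def abs_if)
      qed
      define A where "A = {f. f ` K \<subseteq> U} \<inter> S"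
      have "openin (compact_open_topology X) {f. f ` K \<subseteq> U}"
        unfolding compact_open_topology_def
        by (rule topology_generated_by_Basis) (use Kc U in blast)
      then have Ao: "openin ?CS A" unfolding A_def openin_subtopology by blast
      show "\<exists>T. openin ?P T \<and> x \<in> T \<and> T \<subseteq> {x \<in> topspace ?P. (\<lambda>(\<alpha>,t). \<alpha> t) x \<in> U}"
      proof (intro exI conjI)
        show "openin ?P (A \<times> V)" using Ao Vo by (simp add: openin_prod_Times_iff)
        show "x \<in> A \<times> V" using xat a t aK e(1) unfolding A_def V_def by auto
        show "A \<times> V \<subseteq> {x \<in> topspace ?P. (\<lambda>(\<alpha>,t). \<alpha> t) x \<in> U}"
        proof
          fix y assume "y \<in> A \<times> V"
          then obtain f u where y: "y = (f,u)" and fA: "f \<in> A" and uV: "u \<in> V" by blast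
          have "u \<in> K" using uV unfolding V_def K_def by (auto simp: dist_real_def abs_if split: if_splits)
          then show "y \<in> {x \<in> topspace ?P. (\<lambda>(\<alpha>,t). \<alpha> t) x \<in> U}"
            using fA uV tsP y unfolding A_def V_def by auto
        qed
      qed
    qed
  qed
qed

definition Hf :: "(real \<Rightarrow> 'a) \<Rightarrow> real \<Rightarrow> (real \<Rightarrow> 'a) \<Rightarrow> real \<Rightarrow> 'a" where
  "Hf p s \<alpha> t = (if t \<in> {0..1} then (if t \<le> 1 - s/4 then \<alpha> (max 0 (min 1 ((t - s/4)/(1 - s/2))))
      else p (max 0 (s - \<bar>8*t - 8 + s\<bar>))) else undefined)"

lemma Hf_joint:
  assumes S: "\<And>\<alpha>. \<alpha> \<in> S \<Longrightarrow> continuous_map (top_of_set {0..1}) X \<alpha> \<and> \<alpha> 1 = p 0"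
    and p: "pathin X p"
  shows "continuous_map (prod_topology (prod_topology (top_of_set {0..1}) (subtopology (compact_open_topology X) S)) (top_of_set {0..1})) X (\<lambda>((s,\<alpha>),t). Hf p s \<alpha> t)"
proof -
  let ?CS = "subtopology (compact_open_topology X) S"
  let ?Z = "prod_topology (prod_topology (top_of_set {0..1}) ?CS) (top_of_set {0..1})"
  have tsZ: "topspace ?Z = ({0..1} \<times> S) \<times> {0..1}" by (simp add: co_topspace)
  have "continuous_map ?Z (top_of_set {0..1}) (fst \<circ> fst)"
    by (rule continuous_map_compose[OF continuous_map_fst continuous_map_fst])
  then have cs: "continuous_map ?Z euclideanreal (\<lambda>x. fst (fst x))"
    by (metis (no_types, lifting) o_def continuous_map_into_fulltopology continuous_map_eq)
  have "continuous_map ?Z (top_of_set {0..1}) snd"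
    by (intro continuous_map_snd)
  then have ct: "continuous_map ?Z euclideanreal (\<lambda>x. snd x)"
    by (metis (no_types, lifting) o_def continuous_map_into_fulltopology continuous_map_eq)
  have "continuous_map ?Z ?CS (snd \<circ> fst)"
    by (rule continuous_map_compose[OF continuous_map_fst continuous_map_snd])
  then have ca: "continuous_map ?Z ?CS (\<lambda>x. snd (fst x))" by (simp add: o_def)
  define \<phi> where "\<phi> x = max 0 (min 1 ((snd x - fst (fst x)/4)/(1 - fst (fst x)/2)))" for x :: "(real \<times> (real \<Rightarrow> 'a)) \<times> real"
  define \<psi> where "\<psi> x = max 0 (fst (fst x) - \<bar>8 * snd x - 8 + fst (fst x)\<bar>)" for x :: "(real \<times> (real \<Rightarrow> 'a)) \<times> real"
  have cphi: "continuous_map ?Z (top_of_set {0..1}) \<phi>"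
    unfolding continuous_map_in_subtopology
  proof
    show "continuous_map ?Z euclideanreal \<phi>" unfolding \<phi>_def
      by (intro continuous_intros cs ct) (auto simp: tsZ)
    show "\<phi> \<in> topspace ?Z \<rightarrow> {0..1}" by (auto simp: \<phi>_def)
  qed
  have cpsi: "continuous_map ?Z (top_of_set {0..1}) \<psi>"
    unfolding continuous_map_in_subtopology
  proof
    show "continuous_map ?Z euclideanreal \<psi>" unfolding \<psi>_def
      by (intro continuous_intros cs ct)
    show "\<psi> \<in> topspace ?Z \<rightarrow> {0..1}" by (auto simp: \<psi>_def tsZ)
  qed
  have ev: "continuous_map (prod_topology ?CS (top_of_set {0..1})) X (\<lambda>(\<alpha>,t). \<alpha> t)"
    by (rule ev_cont) (use S in blast)
  have "continuous_map ?Z X ((\<lambda>(\<alpha>,t). \<alpha> t) \<circ> (\<lambda>x. (snd (fst x), \<phi> x)))"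
    by (intro continuous_map_compose[OF _ ev] continuous_map_pairedI ca cphi)
  then have cf: "continuous_map ?Z X (\<lambda>x. snd (fst x) (\<phi> x))" by (simp add: o_def)
  have "continuous_map ?Z X (p \<circ> \<psi>)"
    by (intro continuous_map_compose[OF cpsi]) (use p in \<open>simp add: pathin_def\<close>)
  then have cg: "continuous_map ?Z X (\<lambda>x. p (\<psi> x))" by (simp add: o_def)
  have G: "continuous_map ?Z X (\<lambda>x. if snd x \<le> 1 - fst (fst x)/4 then snd (fst x) (\<phi> x) else p (\<psi> x))"
  proof (rule continuous_map_cases_le)
    show "continuous_map ?Z euclideanreal (\<lambda>x. 1 - fst (fst x)/4)"
      by (intro continuous_intros cs) auto
    show "continuous_map (subtopology ?Z {x \<in> topspace ?Z. snd x \<le> 1 - fst (fst x) / 4}) X (\<lambda>x. snd (fst x) (\<phi> x))"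
      by (rule continuous_map_from_subtopology[OF cf])
    show "continuous_map (subtopology ?Z {x \<in> topspace ?Z. 1 - fst (fst x) / 4 \<le> snd x}) X (\<lambda>x. p (\<psi> x))"
      by (rule continuous_map_from_subtopology[OF cg])
  next
    fix x :: "(real \<times> (real \<Rightarrow> 'a)) \<times> real" assume x: "x \<in> topspace ?Z" and eq: "snd x = 1 - fst (fst x) / 4"
    obtain s \<alpha> t where xx: "x = ((s,\<alpha>),t)" by (metis prod.collapse)
    have s: "0 \<le> s" "s \<le> 1" and a: "\<alpha> \<in> S" using x xx tsZ by auto
    have t: "t = 1 - s/4" using eq xx by simp
    have "(t - s/4)/(1 - s/2) = 1" using s t by (simp add: field_simps)
    then have "\<phi> x = 1" unfolding \<phi>_def xx by simp
    moreover have "\<psi> x = 0" unfolding \<psi>_def xx using s t by simp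
    ultimately show "snd (fst x) (\<phi> x) = p (\<psi> x)" using S[OF a] xx by simp
  qed (rule ct)
  show ?thesis
  proof (rule continuous_map_eq[OF G])
    fix x :: "(real \<times> (real \<Rightarrow> 'a)) \<times> real" assume x: "x \<in> topspace ?Z"
    obtain s \<alpha> t where xx: "x = ((s,\<alpha>),t)" by (metis prod.collapse)
    then have "t \<in> {0..1}" using x tsZ by auto
    then show "(if snd x \<le> 1 - fst (fst x)/4 then snd (fst x) (\<phi> x) else p (\<psi> x)) = (\<lambda>((s,\<alpha>),t). Hf p s \<alpha> t) x"
      unfolding xx Hf_def \<phi>_def \<psi>_def by simp
  qed
qed


lemma Hf_cont:
  assumes S: "\<And>\<alpha>. \<alpha> \<in> S \<Longrightarrow> continuous_map (top_of_set {0..1}) X \<alpha> \<and> \<alpha> 1 = p 0"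
    and p: "pathin X p"
  shows "continuous_map (prod_topology (top_of_set {0..1}) (subtopology (compact_open_topology X) S)) (compact_open_topology X) (\<lambda>x. Hf p (fst x) (snd x))"
proof (rule co_cont)
  have "(\<lambda>(z,t). Hf p (fst z) (snd z) t) = (\<lambda>((s,\<alpha>),t). Hf p s \<alpha> t)" by (simp add: case_prod_beta fun_eq_iff)
  then show "continuous_map (prod_topology (prod_topology (top_of_set {0..1}) (subtopology (compact_open_topology X) S)) (top_of_set {0..1})) X (\<lambda>(z,t). Hf p (fst z) (snd z) t)"
    using Hf_joint[OF S p] by simp
qed

lemma Hf_loop:
  assumes a: "\<alpha> \<in> loops X x0" and s: "s \<in> {0..1}" and p: "pathin X p" "p 0 = x0"
  shows "Hf p s \<alpha> \<in> loops X x0"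
proof -
  have aa: "continuous_map (top_of_set {0..1}) X \<alpha> \<and> \<alpha> 1 = p 0"
    using a p unfolding loops_def pathin_def by auto
  have J: "continuous_map (prod_topology (prod_topology (top_of_set {0..1}) (subtopology (compact_open_topology X) {\<alpha>})) (top_of_set {0..1})) X (\<lambda>((s,\<alpha>),t). Hf p s \<alpha> t)"
    by (rule Hf_joint) (use aa p in auto)
  have "continuous_map (top_of_set {0..1}) (prod_topology (prod_topology (top_of_set {0..1}) (subtopology (compact_open_topology X) {\<alpha>})) (top_of_set {0..1})) (\<lambda>t. ((s,\<alpha>),t))"
    using s by (intro continuous_map_pairedI continuous_map_id) (auto simp: co_topspace)
  from continuous_map_compose[OF this J]
  have "pathin X (Hf p s \<alpha>)" unfolding pathin_def by (simp add: o_def)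
  moreover have "Hf p s \<alpha> 0 = x0"
  proof -
    have le: "(0 - s/4)/(1 - s/2) \<le> 0" using s by (intro divide_nonpos_pos) auto
    have "Hf p s \<alpha> 0 = \<alpha> (max 0 (min 1 ((0 - s/4)/(1 - s/2))))"
      unfolding Hf_def using s by simp
    also have "\<dots> = \<alpha> 0" using le by (simp add: max_def)
    finally show ?thesis using a unfolding loops_def by simp
  qed
  moreover have "Hf p s \<alpha> 1 = x0"
  proof (cases "s = 0")
    case True
    have "Hf p s \<alpha> 1 = \<alpha> 1" unfolding Hf_def True by simp
    then show ?thesis using a unfolding loops_def by simp
  next
    case False
    then have "\<not> (1::real) \<le> 1 - s/4" using s by auto
    then have "Hf p s \<alpha> 1 = p (max 0 (s - \<bar>8*1 - 8 + s\<bar>))" unfolding Hf_def by simp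
    also have "\<dots> = p 0" using s by simp
    finally show ?thesis using p by simp
  qed
  moreover have "Hf p s \<alpha> \<in> extensional {0..1}"
    unfolding Hf_def extensional_def by auto
  ultimately show ?thesis unfolding loops_def by auto
qed

lemma Hf_0:
  assumes a: "\<alpha> \<in> loops X x0"
  shows "Hf p 0 \<alpha> = \<alpha>"
proof
  fix t
  show "Hf p 0 \<alpha> t = \<alpha> t"
  proof (cases "t \<in> {0..1}")
    case True
    have le: "t \<le> 1 - 0/4" using True by simp
    have "Hf p 0 \<alpha> t = \<alpha> (max 0 (min 1 ((t - 0/4)/(1 - 0/2))))"
      unfolding Hf_def by (simp only: if_P[OF True] if_P[OF le])
    moreover have "max 0 (min 1 ((t - 0/4)/(1 - 0/2))) = t" using True by simp
    ultimately show ?thesis by simp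
  next
    case False
    have "\<alpha> \<in> extensional {0..1}" using a unfolding loops_def by blast
    then have "\<alpha> t = undefined" using False by (metis extensional_arb)
    then show ?thesis using False unfolding Hf_def by simp
  qed
qed

lemma Hf_tf:
  assumes a: "\<alpha> \<in> loops X x0" and s: "s \<in> {0..1}" and h: "Hf p s \<alpha> \<in> tf_loops X x0"
  shows "\<alpha> \<in> tf_loops X x0"
  unfolding tf_loops_def
proof (intro CollectI conjI ballI a)
  fix u :: real assume u: "u \<in> {0..1}"
  define t where "t = s/4 + u * (1 - s/2)"
  have d: "1 - s/2 > 0" using s by auto
  have m1: "0 \<le> u * (1 - s/2)" using u d by (intro mult_nonneg_nonneg) auto
  have m2': "u * (1 - s/2) \<le> 1 * (1 - s/2)" using u d by (intro mult_right_mono) auto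
  then have m2: "u * (1 - s/2) \<le> 1 - s/2" by simp
  have s01: "0 \<le> s" "s \<le> 1" using s by auto
  have t1: "0 \<le> t" "t \<le> 1 - s/4" unfolding t_def using s01 m1 m2 by linarith+
  have t2: "1 - t = s/4 + (1 - u) * (1 - s/2)" unfolding t_def by (simp add: field_simps)
  have t3: "0 \<le> 1 - t" "1 - t \<le> 1 - s/4" using t1 s01 m1 unfolding t_def by linarith+
  have e1: "(t - s/4)/(1 - s/2) = u" unfolding t_def using d by simp
  have e2: "((1 - t) - s/4)/(1 - s/2) = 1 - u" unfolding t2 using d by simp
  have tI: "t \<in> {0..1}" "1 - t \<in> {0..1}" using t1 t3 s by auto
  have "Hf p s \<alpha> t = Hf p s \<alpha> (1 - t)" using h tI unfolding tf_loops_def by blast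
  moreover have "Hf p s \<alpha> t = \<alpha> u"
  proof -
    have "Hf p s \<alpha> t = \<alpha> (max 0 (min 1 ((t - s/4)/(1 - s/2))))"
      unfolding Hf_def using tI(1) t1(2) by simp
    then show ?thesis using e1 u by simp
  qed
  moreover have "Hf p s \<alpha> (1 - t) = \<alpha> (1 - u)"
  proof -
    have "Hf p s \<alpha> (1 - t) = \<alpha> (max 0 (min 1 (((1 - t) - s/4)/(1 - s/2))))"
      unfolding Hf_def using tI(2) t3(2) by simp
    then show ?thesis using e2 u by simp
  qed
  ultimately show "\<alpha> u = \<alpha> (1 - u)" by simp
qed

lemma Hf_1:
  assumes t1: "t1 \<in> {0..1}" "p t1 \<noteq> x0" and p0: "p 0 = x0" and a: "\<alpha> \<in> loops X x0"
  shows "Hf p 1 \<alpha> \<notin> tf_loops X x0"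
proof
  assume h: "Hf p 1 \<alpha> \<in> tf_loops X x0"
  have t10: "t1 > 0" using t1 p0 by (metis atLeastAtMost_iff less_eq_real_def)
  define t where "t = (8 - t1)/8"
  have "t \<in> {0..1}" using t1 t10 unfolding t_def by auto
  then have eq: "Hf p 1 \<alpha> t = Hf p 1 \<alpha> (1 - t)" using h unfolding tf_loops_def by blast
  have tI: "t \<in> {0..1}" "1 - t \<in> {0..1}" using t1 t10 unfolding t_def by auto
  have n1: "\<not> t \<le> 1 - 1/4" using t1 unfolding t_def by auto
  have ab: "\<bar>8*t - 8 + 1\<bar> = 1 - t1" using t1 unfolding t_def by auto
  have "Hf p 1 \<alpha> t = p (max 0 (1 - \<bar>8*t - 8 + 1\<bar>))"
    unfolding Hf_def using tI(1) n1 by simp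
  also have "\<dots> = p t1" using ab t10 by simp
  finally have v1: "Hf p 1 \<alpha> t = p t1" .
  have y1: "1 - t \<le> 1 - 1/4" using t1 unfolding t_def by auto
  have y2: "((1 - t) - 1/4)/(1 - 1/2) \<le> (0::real)" using t1 unfolding t_def by auto
  have "Hf p 1 \<alpha> (1 - t) = \<alpha> (max 0 (min 1 (((1 - t) - 1/4)/(1 - 1/2))))"
    unfolding Hf_def using tI(2) y1 by simp
  also have "\<dots> = \<alpha> 0"
  proof -
    have "max 0 (min 1 z) = 0" if "z \<le> 0" for z :: real using that by auto
    from this[OF y2] show ?thesis by simp
  qed
  finally have "Hf p 1 \<alpha> (1 - t) = x0" using a unfolding loops_def by simp
  moreover note v1
  ultimately show False using eq t1 by simp
qed


lemma Hf_hom: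
  assumes SL: "S \<subseteq> loops X x0" and cl: "\<And>\<alpha> s. \<alpha> \<in> S \<Longrightarrow> s \<in> {0..1} \<Longrightarrow> Hf p s \<alpha> \<in> S"
    and p: "pathin X p" "p 0 = x0"
  shows "homotopic_with (\<lambda>h. True) (subtopology (compact_open_topology X) S) (subtopology (compact_open_topology X) S) (Hf p 1) id"
proof -
  let ?CS = "subtopology (compact_open_topology X) S"
  let ?P = "prod_topology (top_of_set ({0..1}::real set)) ?CS"
  have tsP: "topspace ?P = {0..1} \<times> S" by (simp add: co_topspace)
  have Sc: "\<And>\<alpha>. \<alpha> \<in> S \<Longrightarrow> continuous_map (top_of_set {0..1}) X \<alpha> \<and> \<alpha> 1 = p 0"
    using SL p unfolding loops_def pathin_def by auto
  have C: "continuous_map ?P (compact_open_topology X) (\<lambda>x. Hf p (fst x) (snd x))"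
    by (rule Hf_cont[OF Sc p(1)]) auto
  have "continuous_map ?P (top_of_set {0..1}) fst" by (rule continuous_map_fst)
  then have cf: "continuous_map ?P euclideanreal fst" by (rule continuous_map_into_fulltopology)
  have j1: "continuous_map ?P (top_of_set {0..1}) (\<lambda>x. 1 - fst x)"
    unfolding continuous_map_in_subtopology
  proof
    show "continuous_map ?P euclideanreal (\<lambda>x. 1 - fst x)"
      by (intro continuous_intros cf)
    show "(\<lambda>x. 1 - fst x) \<in> topspace ?P \<rightarrow> {0..1}" using tsP by auto
  qed
  have j: "continuous_map ?P ?P (\<lambda>x. (1 - fst x, snd x))"
    by (intro continuous_map_pairedI j1 continuous_map_snd)
  have "continuous_map ?P (compact_open_topology X) ((\<lambda>x. Hf p (fst x) (snd x)) \<circ> (\<lambda>x. (1 - fst x, snd x)))"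
    by (rule continuous_map_compose[OF j C])
  then have h0: "continuous_map ?P (compact_open_topology X) (\<lambda>x. Hf p (1 - fst x) (snd x))"
    by (simp add: o_def)
  have h: "continuous_map ?P ?CS (\<lambda>x. Hf p (1 - fst x) (snd x))"
    unfolding continuous_map_in_subtopology
  proof
    show "continuous_map ?P (compact_open_topology X) (\<lambda>x. Hf p (1 - fst x) (snd x))" by (rule h0)
    show "(\<lambda>x. Hf p (1 - fst x) (snd x)) \<in> topspace ?P \<rightarrow> S" using tsP cl by auto
  qed
  show ?thesis
    unfolding homotopic_with[where P="\<lambda>h. True", simplified]
  proof (intro exI conjI ballI)
    show "continuous_map ?P ?CS (\<lambda>x. Hf p (1 - fst x) (snd x))" by (rule h)
  next
    fix x assume "x \<in> topspace ?CS"
    show "Hf p (1 - fst (0::real, x)) (snd (0::real, x)) = Hf p 1 x" by simp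
  next
    fix x assume "x \<in> topspace ?CS"
    then have "x \<in> loops X x0" using SL by (auto simp: co_topspace)
    then show "Hf p (1 - fst (1::real, x)) (snd (1::real, x)) = id x" using Hf_0 by simp
  qed
qed

theorem lemma1:
  fixes X :: "'a topology" and x0 :: 'a
  assumes "\<exists>p. pathin X p \<and> p 0 = x0 \<and> (\<exists>t\<in>{0..1}. p t \<noteq> x0)"
  shows "homotopy_equivalence_map
           (subtopology (loop_space X x0) (loops X x0 - tf_loops X x0))
           (loop_space X x0) id"
proof -
  obtain p t1 where p: "pathin X p" "p 0 = x0" and t1: "t1 \<in> {0..1}" "p t1 \<noteq> x0" using assms by blast
  define L where "L = loops X x0"
  define T where "T = tf_loops X x0"
  let ?CO = "compact_open_topology X"
  have e1: "loop_space X x0 = subtopology ?CO L" unfolding loop_space_def L_def by (rule refl)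
  have e2: "loops X x0 - tf_loops X x0 = L - T" unfolding L_def T_def by (rule refl)
  have e3: "subtopology (subtopology ?CO L) (L - T) = subtopology ?CO (L - T)"
  proof -
    have "L \<inter> (L - T) = L - T" by blast
    then show ?thesis unfolding subtopology_subtopology by simp
  qed
  have clD: "Hf p s \<alpha> \<in> L - T" if "\<alpha> \<in> L - T" "s \<in> {0..1}" for \<alpha> s
  proof -
    have a: "\<alpha> \<in> loops X x0" "\<alpha> \<notin> tf_loops X x0" using that(1) unfolding L_def T_def by auto
    have "Hf p s \<alpha> \<in> loops X x0" by (rule Hf_loop[OF a(1) that(2) p])
    moreover have "Hf p s \<alpha> \<notin> tf_loops X x0" using Hf_tf[OF a(1) that(2)] a(2) by blast
    ultimately show ?thesis unfolding L_def T_def by blast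
  qed
  have clL: "Hf p s \<alpha> \<in> L" if "\<alpha> \<in> L" "s \<in> {0..1}" for \<alpha> s
    using Hf_loop[OF _ that(2) p] that(1) unfolding L_def by blast
  have LT: "L - T \<subseteq> loops X x0" "L \<subseteq> loops X x0" unfolding L_def by auto
  have H1: "homotopic_with (\<lambda>h. True) (subtopology ?CO (L - T)) (subtopology ?CO (L - T)) (Hf p 1) id"
    by (rule Hf_hom[OF LT(1) clD p])
  have H2: "homotopic_with (\<lambda>h. True) (subtopology ?CO L) (subtopology ?CO L) (Hf p 1) id"
    by (rule Hf_hom[OF LT(2) clL p])
  have Lc: "\<And>\<alpha>. \<alpha> \<in> L \<Longrightarrow> continuous_map (top_of_set {0..1}) X \<alpha> \<and> \<alpha> 1 = p 0"
    using p unfolding L_def loops_def pathin_def by auto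
  have C: "continuous_map (prod_topology (top_of_set {0..1}) (subtopology ?CO L)) ?CO (\<lambda>x. Hf p (fst x) (snd x))"
    by (rule Hf_cont[OF Lc p(1)])
  have "continuous_map (subtopology ?CO L) (prod_topology (top_of_set {0..1}) (subtopology ?CO L)) (\<lambda>\<alpha>. (1::real, \<alpha>))"
    by (intro continuous_map_pairedI) (simp_all add: continuous_map_const continuous_map_id[unfolded id_def])
  from continuous_map_compose[OF this C]
  have cg0: "continuous_map (subtopology ?CO L) ?CO (Hf p 1)" by (simp add: o_def)
  have tsL: "topspace (subtopology ?CO A) = A" for A by (simp add: co_topspace)
  have cg: "continuous_map (subtopology ?CO L) (subtopology ?CO (L - T)) (Hf p 1)"
    unfolding continuous_map_in_subtopology
  proof
    show "continuous_map (subtopology ?CO L) ?CO (Hf p 1)" by (rule cg0)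
    show "Hf p 1 \<in> topspace (subtopology ?CO L) \<rightarrow> L - T"
    proof
      fix \<alpha> assume "\<alpha> \<in> topspace (subtopology ?CO L)"
      then have a: "\<alpha> \<in> L" using tsL by blast
      have "Hf p 1 \<alpha> \<in> L" using clL[OF a] by simp
      moreover have "Hf p 1 \<alpha> \<notin> T" using Hf_1[OF t1 p(2)] a unfolding L_def T_def by blast
      ultimately show "Hf p 1 \<alpha> \<in> L - T" by blast
    qed
  qed
  have ci: "continuous_map (subtopology ?CO (L - T)) (subtopology ?CO L) id"
    unfolding continuous_map_in_subtopology
  proof
    show "continuous_map (subtopology ?CO (L - T)) ?CO id"
      by (rule continuous_map_from_subtopology[OF continuous_map_id])
    show "id \<in> topspace (subtopology ?CO (L - T)) \<rightarrow> L" using tsL by auto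
  qed
  have final: "homotopy_equivalence_map (subtopology ?CO (L - T)) (subtopology ?CO L) id"
    unfolding homotopy_equivalence_map_def
  proof (intro conjI exI[of _ "Hf p 1"] ci cg)
    show "homotopic_with (\<lambda>h. True) (subtopology ?CO (L - T)) (subtopology ?CO (L - T)) (Hf p 1 \<circ> id) id"
      using H1 by (simp only: comp_id)
    show "homotopic_with (\<lambda>h. True) (subtopology ?CO L) (subtopology ?CO L) (id \<circ> Hf p 1) id"
      using H2 by (simp only: id_comp)
  qed
  show ?thesis unfolding e2 e1 e3 by (rule final)
qed

end
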